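(* Let $M$ be a matroid on $E$ whose dual is transversal with maximal presentation $\mathcal A=(A_1,\ldots,A_r)$, $r=r^*(M)$; let $e\in E$, ordered so that for some $k\in[r]$, $e\in A_i$ iff $i\le k$. Let $G$ be a minimal $(e,\mathcal A)$-presenting graph on vertex set $[k]$ for which the identity map is the presenting map. If $G$ is a tree with edge set $\{\{i_1,j_1\},\ldots,\{i_{k-1},j_{k-1}\}\}$, then $$(\mathrm{cl}_{M\backslash e}(A_{i_1}\cup A_{j_1}-e),\ldots,\mathrm{cl}_{M\backslash e}(A_{i_{k-1}}\cup A_{j_{k-1}}-e),A_{k+1},\ldots,A_r)$$ is a presentation of $(M\backslash e)^*$.
   Context: $M^*=M[\mathcal A]$, the transversal matroid whose independent sets are the partial transversals of $\mathcal A$; the presentation is maximal if every $A_i$ is a cyclic flat of $M$ (a flat that is a union of circuits). For $X\subseteq E$: $\mathcal A(X)=\{i:A_i\subseteq X\}$, $\mathcal A_e(X)=\{i\in\mathcal A(X): e\in A_i\}$, and $G[U]$ is the induced subgraph on $U$. A graph with vertex set $\mathcal A_e(E)=[k]$ is $(e,\mathcal A)$-presenting if for all distinct $i,j$ the graph $G[\mathcal A_e(\mathrm{cl}_M(A_i\cup A_j))]$ is connected; minimal if deleting any one edge destroys this property. *)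

theory Defs
  imports Main
begin

definition matroid :: "'a set \<Rightarrow> ('a set \<Rightarrow> bool) \<Rightarrow> bool" where
  "matroid E indep \<longleftrightarrow>
     finite E \<and> indep {} \<and>
     (\<forall>X. indep X \<longrightarrow> X \<subseteq> E) \<and>
     (\<forall>X Y. indep Y \<and> X \<subseteq> Y \<longrightarrow> indep X) \<and>
     (\<forall>X Y. indep X \<and> indep Y \<and> card X < card Y \<longrightarrow> (\<exists>y\<in>Y - X. indep (insert y X)))"

definition mrank :: "('a set \<Rightarrow> bool) \<Rightarrow> 'a set \<Rightarrow> nat" where
  "mrank indep X = Max {card I | I. I \<subseteq> X \<and> indep I}"

definition mcl :: "'a set \<Rightarrow> ('a set \<Rightarrow> bool) \<Rightarrow> 'a set \<Rightarrow> 'a set" where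
  "mcl E indep X = {x \<in> E. mrank indep (insert x X) = mrank indep X}"

text \<open>Dual matroid: X is independent in M* iff E - X is spanning in M.\<close>
definition dual_indep :: "'a set \<Rightarrow> ('a set \<Rightarrow> bool) \<Rightarrow> 'a set \<Rightarrow> bool" where
  "dual_indep E indep X \<longleftrightarrow> X \<subseteq> E \<and> mrank indep (E - X) = mrank indep E"

text \<open>Deletion M \ e (ground set E - {e}).\<close>
definition del_indep :: "('a set \<Rightarrow> bool) \<Rightarrow> 'a \<Rightarrow> 'a set \<Rightarrow> bool" where
  "del_indep indep e X \<longleftrightarrow> indep X \<and> e \<notin> X"

definition circuit :: "'a set \<Rightarrow> ('a set \<Rightarrow> bool) \<Rightarrow> 'a set \<Rightarrow> bool" where
  "circuit E indep C \<longleftrightarrow> C \<subseteq> E \<and> \<not> indep C \<and> (\<forall>x\<in>C. indep (C - {x}))"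

definition cyclic_flat :: "'a set \<Rightarrow> ('a set \<Rightarrow> bool) \<Rightarrow> 'a set \<Rightarrow> bool" where
  "cyclic_flat E indep F \<longleftrightarrow> F \<subseteq> E \<and> mcl E indep F = F \<and>
     F = \<Union>{C. circuit E indep C \<and> C \<subseteq> F}"

text \<open>Set systems (A_1,...,A_r) are functions on indices 1..r.\<close>
definition partial_transversal :: "(nat \<Rightarrow> 'a set) \<Rightarrow> nat \<Rightarrow> 'a set \<Rightarrow> bool" where
  "partial_transversal A r X \<longleftrightarrow>
     finite X \<and> (\<exists>\<phi>. inj_on \<phi> X \<and> (\<forall>x\<in>X. \<phi> x \<in> {1..r} \<and> x \<in> A (\<phi> x)))"

definition is_presentation :: "'a set \<Rightarrow> ('a set \<Rightarrow> bool) \<Rightarrow> (nat \<Rightarrow> 'a set) \<Rightarrow> nat \<Rightarrow> bool" where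
  "is_presentation E indep A r \<longleftrightarrow>
     (\<forall>i\<in>{1..r}. A i \<subseteq> E) \<and> (\<forall>X. indep X \<longleftrightarrow> X \<subseteq> E \<and> partial_transversal A r X)"

definition maximal_presentation_of_dual ::
  "'a set \<Rightarrow> ('a set \<Rightarrow> bool) \<Rightarrow> (nat \<Rightarrow> 'a set) \<Rightarrow> nat \<Rightarrow> bool" where
  "maximal_presentation_of_dual E indep A r \<longleftrightarrow>
     is_presentation E (dual_indep E indep) A r \<and> (\<forall>i\<in>{1..r}. cyclic_flat E indep (A i))"

definition Ae :: "(nat \<Rightarrow> 'a set) \<Rightarrow> nat \<Rightarrow> 'a \<Rightarrow> 'a set \<Rightarrow> nat set" where
  "Ae A r e X = {i \<in> {1..r}. A i \<subseteq> X \<and> e \<in> A i}"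

definition graph_on :: "nat set \<Rightarrow> nat set set \<Rightarrow> bool" where
  "graph_on V Ed \<longleftrightarrow> (\<forall>x\<in>Ed. \<exists>u v. x = {u, v} \<and> u \<noteq> v \<and> u \<in> V \<and> v \<in> V)"

definition induced_adj :: "nat set set \<Rightarrow> nat set \<Rightarrow> (nat \<times> nat) set" where
  "induced_adj Ed U = {(u, v). u \<in> U \<and> v \<in> U \<and> {u, v} \<in> Ed}"

definition connected_induced :: "nat set set \<Rightarrow> nat set \<Rightarrow> bool" where
  "connected_induced Ed U \<longleftrightarrow> (\<forall>u\<in>U. \<forall>v\<in>U. (u, v) \<in> (induced_adj Ed U)\<^sup>*)"

definition has_cycle :: "nat set \<Rightarrow> nat set set \<Rightarrow> bool" where
  "has_cycle V Ed \<longleftrightarrow> (\<exists>vs. length vs \<ge> 3 \<and> distinct vs \<and> set vs \<subseteq> V \<and>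
      (\<forall>t < length vs. {vs ! t, vs ! ((t + 1) mod length vs)} \<in> Ed))"

definition is_tree :: "nat set \<Rightarrow> nat set set \<Rightarrow> bool" where
  "is_tree V Ed \<longleftrightarrow> graph_on V Ed \<and> V \<noteq> {} \<and> connected_induced Ed V \<and> \<not> has_cycle V Ed"

definition presenting :: "'a set \<Rightarrow> ('a set \<Rightarrow> bool) \<Rightarrow> (nat \<Rightarrow> 'a set) \<Rightarrow> nat \<Rightarrow> 'a \<Rightarrow> nat \<Rightarrow> nat set set \<Rightarrow> bool" where
  "presenting E indep A r e k Ed \<longleftrightarrow> graph_on {1..k} Ed \<and>
     (\<forall>i\<in>{1..k}. \<forall>j\<in>{1..k}. i \<noteq> j \<longrightarrow>
        connected_induced Ed (Ae A r e (mcl E indep (A i \<union> A j))))"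

definition minimal_presenting :: "'a set \<Rightarrow> ('a set \<Rightarrow> bool) \<Rightarrow> (nat \<Rightarrow> 'a set) \<Rightarrow> nat \<Rightarrow> 'a \<Rightarrow> nat \<Rightarrow> nat set set \<Rightarrow> bool" where
  "minimal_presenting E indep A r e k Ed \<longleftrightarrow> presenting E indep A r e k Ed \<and>
     (\<forall>x\<in>Ed. \<not> presenting E indep A r e k (Ed - {x}))"

end

theory Submission
  imports Defs
begin


lemma m_finite: "matroid E indep \<Longrightarrow> indep I \<Longrightarrow> finite I"
  unfolding matroid_def by (meson finite_subset)

lemma m_sub: "matroid E indep \<Longrightarrow> indep I \<Longrightarrow> I \<subseteq> E"
  unfolding matroid_def by blast

lemma m_down: "matroid E indep \<Longrightarrow> indep J \<Longrightarrow> I \<subseteq> J \<Longrightarrow> indep I"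
  unfolding matroid_def by blast

lemma m_aug: "matroid E indep \<Longrightarrow> indep X \<Longrightarrow> indep Y \<Longrightarrow> card X < card Y \<Longrightarrow> \<exists>y\<in>Y - X. indep (insert y X)"
  unfolding matroid_def by blast

lemma mrank_fin: assumes "matroid E indep"
  shows "finite {card I | I. I \<subseteq> X \<and> indep I}" and "{card I | I. I \<subseteq> X \<and> indep I} \<noteq> {}"
proof -
  have "{card I | I. I \<subseteq> X \<and> indep I} \<subseteq> card ` Pow E" using m_sub[OF assms] by blast
  moreover have "finite E" using assms unfolding matroid_def by blast
  ultimately show "finite {card I | I. I \<subseteq> X \<and> indep I}" by (meson finite_Pow_iff finite_imageI finite_subset)
  have "indep {}" using assms unfolding matroid_def by blast
  then show "{card I | I. I \<subseteq> X \<and> indep I} \<noteq> {}" by blast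
qed

lemma mrank_ge: assumes "matroid E indep" "indep I" "I \<subseteq> X" shows "card I \<le> mrank indep X"
  unfolding mrank_def using mrank_fin[OF assms(1)] assms(2,3) by (intro Max_ge) blast+

lemma mrank_ex: assumes "matroid E indep" shows "\<exists>I. I \<subseteq> X \<and> indep I \<and> card I = mrank indep X"
proof -
  have "Max {card I | I. I \<subseteq> X \<and> indep I} \<in> {card I | I. I \<subseteq> X \<and> indep I}"
    using mrank_fin[OF assms] by (intro Max_in)
  then obtain I where "I \<subseteq> X" "indep I" "card I = Max {card I | I. I \<subseteq> X \<and> indep I}" by auto
  then show ?thesis unfolding mrank_def by auto
qed

lemma mrank_mono: assumes "matroid E indep" "X \<subseteq> Y" shows "mrank indep X \<le> mrank indep Y"
proof -
  obtain I where I: "I \<subseteq> X" "indep I" "card I = mrank indep X" using mrank_ex[OF assms(1)] by blast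
  have "card I \<le> mrank indep Y" using I assms(2) by (intro mrank_ge[OF assms(1)]) auto
  then show ?thesis using I(3) by simp
qed

lemma mrank_extend: assumes M: "matroid E indep"
  shows "indep I \<Longrightarrow> I \<subseteq> X \<Longrightarrow> \<exists>J. I \<subseteq> J \<and> J \<subseteq> X \<and> indep J \<and> card J = mrank indep X"
proof (induction "mrank indep X - card I" arbitrary: I rule: less_induct)
  case less
  show ?case
  proof (cases "card I < mrank indep X")
    case False
    then show ?thesis using mrank_ge[OF M less.prems(1,2)] less.prems by (intro exI[of _ I]) auto
  next
    case True
    obtain K where K: "K \<subseteq> X" "indep K" "card K = mrank indep X" using mrank_ex[OF M] by blast
    then obtain y where y: "y \<in> K - I" "indep (insert y I)" using m_aug[OF M less.prems(1) K(2)] True by auto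
    have fI: "finite I" using m_finite[OF M less.prems(1)] .
    have c: "card (insert y I) = Suc (card I)" using y fI by simp
    have "mrank indep X - card (insert y I) < mrank indep X - card I" using c True by simp
    from less.hyps[OF this y(2)] obtain J where "insert y I \<subseteq> J" "J \<subseteq> X" "indep J" "card J = mrank indep X"
      using y K less.prems by blast
    then show ?thesis by blast
  qed
qed

lemma cl_mono_rank: assumes M: "matroid E indep" and FW: "F \<subseteq> W"
  and eq: "mrank indep (insert c F) = mrank indep F"
  shows "mrank indep (insert c W) = mrank indep W"
proof (rule ccontr)
  assume ne: "mrank indep (insert c W) \<noteq> mrank indep W"
  have cW: "c \<notin> W"
  proof
    assume "c \<in> W" then have "insert c W = W" by blast
    with ne show False by simp
  qed
  have "mrank indep W \<le> mrank indep (insert c W)" by (rule mrank_mono[OF M]) blast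
  then have gt: "mrank indep (insert c W) > mrank indep W" using ne by linarith
  obtain I where I: "I \<subseteq> F" "indep I" "card I = mrank indep F" using mrank_ex[OF M] by blast
  obtain J where J: "I \<subseteq> J" "J \<subseteq> W" "indep J" "card J = mrank indep W" proof -
    have "I \<subseteq> W" using I(1) FW by (rule subset_trans)
    from mrank_extend[OF M I(2) this] show ?thesis using that by blast
  qed
  obtain K where K: "K \<subseteq> insert c W" "indep K" "card K = mrank indep (insert c W)" using mrank_ex[OF M] by blast
  obtain y where y: "y \<in> K - J" "indep (insert y J)" using m_aug[OF M J(3) K(2)] gt J(4) K(3) by auto
  have fJ: "finite J" using m_finite[OF M J(3)] .
  show False
  proof (cases "y = c")
    case False
    then have "insert y J \<subseteq> W" using y K J by auto
    from mrank_ge[OF M y(2) this] have "card (insert y J) \<le> mrank indep W" .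
    then show False using y fJ J(4) by simp
  next
    case True
    have "indep (insert c I)" using m_down[OF M y(2)] True J(1) by blast
    moreover have "insert c I \<subseteq> insert c F" using I by blast
    ultimately have "card (insert c I) \<le> mrank indep (insert c F)" by (rule mrank_ge[OF M])
    moreover have "c \<notin> I" using cW I(1) FW by blast
    moreover have "finite I" using m_finite[OF M I(2)] .
    ultimately show False using eq I(3) by simp
  qed
qed

lemma mcl_mono: assumes "matroid E indep" "F \<subseteq> W" shows "mcl E indep F \<subseteq> mcl E indep W"
proof
  fix x assume "x \<in> mcl E indep F"
  then have "x \<in> E" "mrank indep (insert x F) = mrank indep F" unfolding mcl_def by auto
  then show "x \<in> mcl E indep W" using cl_mono_rank[OF assms] unfolding mcl_def by auto
qed

lemma mcl_ext: "F \<subseteq> E \<Longrightarrow> F \<subseteq> mcl E indep F"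
proof
  fix x assume "F \<subseteq> E" "x \<in> F"
  then show "x \<in> mcl E indep F" unfolding mcl_def by (simp add: insert_absorb subsetD)
qed

lemma mrank_del: "e \<notin> Z \<Longrightarrow> mrank (del_indep indep e) Z = mrank indep Z"
  unfolding mrank_def del_indep_def by (intro arg_cong[where f=Max]) blast

lemma mcl_del_sub: "e \<notin> Y \<Longrightarrow> mcl (E - {e}) (del_indep indep e) Y \<subseteq> mcl E indep Y - {e}"
proof
  fix x assume a: "e \<notin> Y" "x \<in> mcl (E - {e}) (del_indep indep e) Y"
  then have "x \<noteq> e" "x \<in> E" and eq: "mrank (del_indep indep e) (insert x Y) = mrank (del_indep indep e) Y"
    unfolding mcl_def by auto
  moreover have "mrank (del_indep indep e) (insert x Y) = mrank indep (insert x Y)"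
    using a(1) \<open>x \<noteq> e\<close> by (intro mrank_del) auto
  moreover have "mrank (del_indep indep e) Y = mrank indep Y" using a(1) by (rule mrank_del)
  ultimately show "x \<in> mcl E indep Y - {e}" unfolding mcl_def by auto
qed

lemma mcl_del_ext: "Y \<subseteq> E - {e} \<Longrightarrow> Y \<subseteq> mcl (E - {e}) (del_indep indep e) Y"
  by (rule mcl_ext)



definition ptT :: "(nat \<Rightarrow> 'a set) \<Rightarrow> nat set \<Rightarrow> 'a set \<Rightarrow> bool" where
  "ptT A T X \<longleftrightarrow> (\<exists>\<phi>. inj_on \<phi> X \<and> (\<forall>x\<in>X. \<phi> x \<in> T \<and> x \<in> A (\<phi> x)))"

definition nbh :: "(nat \<Rightarrow> 'a set) \<Rightarrow> nat set \<Rightarrow> 'a set \<Rightarrow> nat set" where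
  "nbh A T Y = {t \<in> T. A t \<inter> Y \<noteq> {}}"

lemma easy_hall: assumes "finite T" "ptT A T X" "Y \<subseteq> X" shows "card Y \<le> card (nbh A T Y)"
proof -
  obtain \<phi> where \<phi>: "inj_on \<phi> X" "\<forall>x\<in>X. \<phi> x \<in> T \<and> x \<in> A (\<phi> x)" using assms(2) unfolding ptT_def by blast
  have "inj_on \<phi> Y" using \<phi>(1) assms(3) by (rule inj_on_subset)
  moreover have "\<phi> ` Y \<subseteq> nbh A T Y" unfolding nbh_def using \<phi>(2) assms(3) by blast
  moreover have "finite (nbh A T Y)" unfolding nbh_def using assms(1) by simp
  ultimately show ?thesis by (meson card_inj_on_le)
qed

lemma ptT_sub: "ptT A T X \<Longrightarrow> Y \<subseteq> X \<Longrightarrow> ptT A T Y"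
  unfolding ptT_def by (meson inj_on_subset subsetD)

lemma hall: "finite T \<Longrightarrow> finite X \<Longrightarrow> (\<forall>Y. Y \<subseteq> X \<longrightarrow> card Y \<le> card (nbh A T Y)) \<Longrightarrow> ptT A T X"
proof (induction "card X" arbitrary: X T rule: less_induct)
  case less
  note fT = less.prems(1) and fX = less.prems(2) and H = less.prems(3)
  show ?case
  proof (cases "X = {}")
    case True then show ?thesis unfolding ptT_def by simp
  next
    case False
    show ?thesis
    proof (cases "\<exists>Y0. Y0 \<noteq> {} \<and> Y0 \<subset> X \<and> card (nbh A T Y0) \<le> card Y0")
      case True
      then obtain Y0 where Y0: "Y0 \<noteq> {}" "Y0 \<subset> X" "card (nbh A T Y0) \<le> card Y0" by blast
      have fY0: "finite Y0" using Y0(2) fX by (meson finite_subset psubset_imp_subset)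
      have c0: "card Y0 < card X" using fX Y0(2) by (rule psubset_card_mono)
      have "ptT A T Y0"
      proof (rule less.hyps[OF c0 fT fY0], intro allI impI)
        fix Y assume "Y \<subseteq> Y0" then have "Y \<subseteq> X" using Y0(2) by auto
        then show "card Y \<le> card (nbh A T Y)" by (rule H[rule_format])
      qed
      then obtain \<phi>0 where \<phi>0: "inj_on \<phi>0 Y0" "\<forall>x\<in>Y0. \<phi>0 x \<in> T \<and> x \<in> A (\<phi>0 x)" unfolding ptT_def by blast
      define T' where "T' = T - nbh A T Y0"
      have c1: "card (X - Y0) < card X"
      proof -
        have "card (X - Y0) = card X - card Y0" using fY0 Y0(2) by (simp add: card_Diff_subset psubset_imp_subset)
        moreover have "card Y0 > 0" using fY0 Y0(1) by (simp add: card_gt_0_iff)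
        ultimately show ?thesis using c0 by linarith
      qed
      have "ptT A T' (X - Y0)"
      proof (rule less.hyps[OF c1], unfold T'_def)
        show "finite (T - nbh A T Y0)" using fT by simp
        show "finite (X - Y0)" using fX by simp
        show "\<forall>Y. Y \<subseteq> X - Y0 \<longrightarrow> card Y \<le> card (nbh A (T - nbh A T Y0) Y)"
        proof (intro allI impI)
          fix Y assume Y: "Y \<subseteq> X - Y0"
          have fY: "finite Y" using Y fX by (meson finite_Diff finite_subset)
          have eqn: "nbh A (T - nbh A T Y0) Y = nbh A T (Y \<union> Y0) - nbh A T Y0"
            unfolding nbh_def by blast
          have sub: "nbh A T Y0 \<subseteq> nbh A T (Y \<union> Y0)" unfolding nbh_def by blast
          have fin: "finite (nbh A T (Y \<union> Y0))" unfolding nbh_def using fT by simp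
          have "Y \<union> Y0 \<subseteq> X" using Y Y0(2) by auto
          then have "card (nbh A T (Y \<union> Y0)) \<ge> card (Y \<union> Y0)" by (rule H[rule_format])
          moreover have "card (Y \<union> Y0) = card Y + card Y0" using Y fY fY0 by (subst card_Un_disjoint) auto
          moreover have "card (nbh A T (Y \<union> Y0) - nbh A T Y0) = card (nbh A T (Y \<union> Y0)) - card (nbh A T Y0)"
            using sub fin by (simp add: card_Diff_subset finite_subset)
          ultimately show "card Y \<le> card (nbh A (T - nbh A T Y0) Y)" using eqn Y0(3) by simp
        qed
      qed
      then obtain \<phi>1 where \<phi>1: "inj_on \<phi>1 (X - Y0)" "\<forall>x\<in>X - Y0. \<phi>1 x \<in> T' \<and> x \<in> A (\<phi>1 x)" unfolding ptT_def by blast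
      define \<phi> where "\<phi> x = (if x \<in> Y0 then \<phi>0 x else \<phi>1 x)" for x
      have in0: "\<phi>0 x \<in> nbh A T Y0" if "x \<in> Y0" for x using \<phi>0(2) that unfolding nbh_def by blast
      have in1: "\<phi>1 x \<notin> nbh A T Y0" if "x \<in> X - Y0" for x using \<phi>1(2) that unfolding T'_def by blast
      have "inj_on \<phi> X"
      proof (rule inj_onI)
        fix x y assume xy: "x \<in> X" "y \<in> X" "\<phi> x = \<phi> y"
        show "x = y"
        proof (cases "x \<in> Y0"; cases "y \<in> Y0")
          assume "x \<in> Y0" "y \<in> Y0" then show ?thesis using xy \<phi>0(1) unfolding \<phi>_def by (simp add: inj_on_def)
        next
          assume "x \<in> Y0" "y \<notin> Y0" then show ?thesis using xy in0[of x] in1[of y] unfolding \<phi>_def by auto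
        next
          assume "x \<notin> Y0" "y \<in> Y0" then show ?thesis using xy in0[of y] in1[of x] unfolding \<phi>_def by auto
        next
          assume "x \<notin> Y0" "y \<notin> Y0" then show ?thesis using xy \<phi>1(1) unfolding \<phi>_def by (simp add: inj_on_def)
        qed
      qed
      moreover have "\<forall>x\<in>X. \<phi> x \<in> T \<and> x \<in> A (\<phi> x)" using \<phi>0(2) \<phi>1(2) unfolding \<phi>_def T'_def by auto
      ultimately show ?thesis unfolding ptT_def by blast
    next
      case False
      have big: "card Y0 < card (nbh A T Y0)" if "Y0 \<noteq> {}" "Y0 \<subset> X" for Y0
      proof (rule ccontr)
        assume "\<not> card Y0 < card (nbh A T Y0)"
        then have "card (nbh A T Y0) \<le> card Y0" by simp
        then show False using False that by blast
      qed
      obtain x where x: "x \<in> X" using \<open>X \<noteq> {}\<close> by blast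
      have "{x} \<subseteq> X" using x by auto
      then have "card {x} \<le> card (nbh A T {x})" by (rule H[rule_format])
      then have "nbh A T {x} \<noteq> {}" by auto
      then obtain t0 where t0: "t0 \<in> T" "x \<in> A t0" unfolding nbh_def by blast
      have "card X > 0" using x fX card_gt_0_iff by blast
      then have c1: "card (X - {x}) < card X" using x fX by simp
      have "ptT A (T - {t0}) (X - {x})"
      proof (rule less.hyps[OF c1])
        show "finite (T - {t0})" using fT by simp
        show "finite (X - {x})" using fX by simp
        show "\<forall>Y. Y \<subseteq> X - {x} \<longrightarrow> card Y \<le> card (nbh A (T - {t0}) Y)"
        proof (intro allI impI)
          fix Y assume Y: "Y \<subseteq> X - {x}"
          show "card Y \<le> card (nbh A (T - {t0}) Y)"
          proof (cases "Y = {}")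
            case True then show ?thesis by simp
          next
            case False
            have "Y \<subset> X" using Y x by blast
            then have lt: "card Y < card (nbh A T Y)" using big False by simp
            have "nbh A T Y - {t0} \<subseteq> nbh A (T - {t0}) Y" unfolding nbh_def by blast
            moreover have "finite (nbh A (T - {t0}) Y)" unfolding nbh_def using fT by simp
            ultimately have "card (nbh A T Y - {t0}) \<le> card (nbh A (T - {t0}) Y)" by (rule card_mono[rotated])
            moreover have "card (nbh A T Y - {t0}) \<ge> card (nbh A T Y) - 1"
            proof -
              have "finite (nbh A T Y)" unfolding nbh_def using fT by simp
              then show ?thesis by (cases "t0 \<in> nbh A T Y") (simp_all add: card_Diff_singleton)
            qed
            ultimately show ?thesis using lt by linarith
          qed
        qed
      qed
      then obtain \<phi>1 where \<phi>1: "inj_on \<phi>1 (X - {x})" "\<forall>y\<in>X - {x}. \<phi>1 y \<in> T - {t0} \<and> y \<in> A (\<phi>1 y)" unfolding ptT_def by blast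
      define \<phi> where "\<phi> = \<phi>1(x := t0)"
      have "inj_on \<phi> X"
      proof (rule inj_onI)
        fix y z assume yz: "y \<in> X" "z \<in> X" "\<phi> y = \<phi> z"
        show "y = z"
        proof (cases "y = x"; cases "z = x")
          assume "y \<noteq> x" "z \<noteq> x" then show ?thesis using yz \<phi>1(1) unfolding \<phi>_def by (simp add: inj_on_def)
        next
          assume "y = x" "z = x" then show ?thesis by simp
        next
          assume a: "y = x" "z \<noteq> x"
          then have "\<phi> z \<in> T - {t0}" using \<phi>1(2) yz(2) unfolding \<phi>_def by simp
          moreover have "\<phi> y = t0" using a unfolding \<phi>_def by simp
          ultimately show ?thesis using yz(3) by simp
        next
          assume a: "y \<noteq> x" "z = x"
          then have "\<phi> y \<in> T - {t0}" using \<phi>1(2) yz(1) unfolding \<phi>_def by simp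
          moreover have "\<phi> z = t0" using a unfolding \<phi>_def by simp
          ultimately show ?thesis using yz(3) by simp
        qed
      qed
      moreover have "\<forall>y\<in>X. \<phi> y \<in> T \<and> y \<in> A (\<phi> y)" using \<phi>1(2) t0 unfolding \<phi>_def by auto
      ultimately show ?thesis unfolding ptT_def by blast
    qed
  qed
qed



lemma tree_inj:
  assumes conn: "connected_induced Ed U" and p: "p \<in> U" and Ed: "Ed = (\<lambda>t. {i t, j t}) ` T"
  shows "\<exists>g. inj_on g (U - {p}) \<and> (\<forall>v \<in> U - {p}. g v \<in> T \<and> (v = i (g v) \<or> v = j (g v)) \<and> i (g v) \<in> U \<and> j (g v) \<in> U)"
proof -
  define R where "R = induced_adj Ed U"
  define d where "d v = (LEAST n. (v, p) \<in> R ^^ n)" for v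
  have ex: "\<exists>n. (v, p) \<in> R ^^ n" if "v \<in> U" for v
  proof -
    have "(v, p) \<in> R\<^sup>*" using conn that p unfolding connected_induced_def R_def by blast
    then show ?thesis by (simp add: rtrancl_power)
  qed
  have step: "\<exists>t w. t \<in> T \<and> {v, w} = {i t, j t} \<and> w \<in> U \<and> d w < d v" if v: "v \<in> U - {p}" for v
  proof -
    have dv: "(v, p) \<in> R ^^ d v" unfolding d_def using ex[of v] v by (auto intro: LeastI_ex)
    have "d v \<noteq> 0"
    proof
      assume "d v = 0" then have "v = p" using dv by simp
      then show False using v by blast
    qed
    then obtain m where m: "d v = Suc m" by (cases "d v") auto
    then obtain w where w: "(v, w) \<in> R" "(w, p) \<in> R ^^ m" using dv by (metis relpow_Suc_E2)
    have "d w \<le> m" unfolding d_def using w(2) by (rule Least_le)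
    then have lt: "d w < d v" using m by simp
    have "w \<in> U" "{v, w} \<in> Ed" using w(1) unfolding R_def induced_adj_def by auto
    then obtain t where "t \<in> T" "{v, w} = {i t, j t}" using Ed by blast
    then show ?thesis using \<open>w \<in> U\<close> lt by blast
  qed
  then obtain g h where gh: "\<forall>v \<in> U - {p}. g v \<in> T \<and> {v, h v} = {i (g v), j (g v)} \<and> h v \<in> U \<and> d (h v) < d v"
    by metis
  have "inj_on g (U - {p})"
  proof (rule inj_onI)
    fix v v' assume a: "v \<in> U - {p}" "v' \<in> U - {p}" "g v = g v'"
    show "v = v'"
    proof (rule ccontr)
      assume ne: "v \<noteq> v'"
      have e1: "{v, h v} = {v', h v'}" using gh a by metis
      then have "v = h v'" "v' = h v" using ne by (auto simp: doubleton_eq_iff)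
      then show False using gh a by (metis less_asym)
    qed
  qed
  moreover have "\<forall>v \<in> U - {p}. g v \<in> T \<and> (v = i (g v) \<or> v = j (g v)) \<and> i (g v) \<in> U \<and> j (g v) \<in> U"
  proof
    fix v assume v: "v \<in> U - {p}"
    then have "g v \<in> T" "{v, h v} = {i (g v), j (g v)}" "h v \<in> U" using gh by auto
    then show "g v \<in> T \<and> (v = i (g v) \<or> v = j (g v)) \<and> i (g v) \<in> U \<and> j (g v) \<in> U"
      using v by (auto simp: doubleton_eq_iff)
  qed
  ultimately show ?thesis by blast
qed



lemma min_dep: "finite Y \<Longrightarrow> \<not> ptT A T Y \<Longrightarrow> \<exists>C. C \<subseteq> Y \<and> \<not> ptT A T C \<and> (\<forall>c\<in>C. ptT A T (C - {c}))"
proof (induction "card Y" arbitrary: Y rule: less_induct)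
  case less
  show ?case
  proof (cases "\<forall>c\<in>Y. ptT A T (Y - {c})")
    case True then show ?thesis using less.prems by blast
  next
    case False
    then obtain c where c: "c \<in> Y" "\<not> ptT A T (Y - {c})" by blast
    have "card Y > 0" using c(1) less.prems(1) card_gt_0_iff by blast
    then have "card (Y - {c}) < card Y" using c(1) less.prems(1) by simp
    moreover have "finite (Y - {c})" using less.prems(1) by simp
    ultimately obtain C where "C \<subseteq> Y - {c}" "\<not> ptT A T C" "\<forall>c\<in>C. ptT A T (C - {c})"
      using less.hyps c(2) by blast
    then show ?thesis by blast
  qed
qed

lemma circuit_deficient:
  assumes fT: "finite T" and fC: "finite C" and nC: "\<not> ptT A T C" and mC: "\<forall>c\<in>C. ptT A T (C - {c})"
  shows "card (nbh A T C) < card C"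
proof -
  have "\<not> (\<forall>Y. Y \<subseteq> C \<longrightarrow> card Y \<le> card (nbh A T Y))" using hall[OF fT fC] nC by blast
  then obtain Z where Z: "Z \<subseteq> C" "card (nbh A T Z) < card Z" by (auto simp: not_le)
  show ?thesis
  proof (cases "Z = C")
    case True then show ?thesis using Z by simp
  next
    case False
    then obtain c where c: "c \<in> C" "c \<notin> Z" using Z(1) by blast
    then have "Z \<subseteq> C - {c}" using Z(1) by blast
    then have "card Z \<le> card (nbh A T Z)" using easy_hall[OF fT mC[rule_format, OF c(1)]] by blast
    then show ?thesis using Z(2) by simp
  qed
qed

lemma pt_iff: "partial_transversal A r X \<longleftrightarrow> finite X \<and> ptT A {1..r} X"
  unfolding partial_transversal_def ptT_def by auto

lemma conn_mono: "U \<subseteq> P \<Longrightarrow> (a, b) \<in> (induced_adj Ed U)\<^sup>* \<Longrightarrow> (a, b) \<in> (induced_adj Ed P)\<^sup>*"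
proof -
  assume "U \<subseteq> P" "(a, b) \<in> (induced_adj Ed U)\<^sup>*"
  moreover have "induced_adj Ed U \<subseteq> induced_adj Ed P" using \<open>U \<subseteq> P\<close> unfolding induced_adj_def by auto
  ultimately show ?thesis using rtrancl_mono by blast
qed



theorem lemma3p4:
  fixes E :: "'a set" and indep :: "'a set \<Rightarrow> bool" and A :: "nat \<Rightarrow> 'a set"
    and r k :: nat and e :: 'a and Ed :: "nat set set" and i j :: "nat \<Rightarrow> nat"
  assumes "matroid E indep"
    and "maximal_presentation_of_dual E indep A r"
    and "r = mrank (dual_indep E indep) E"
    and "e \<in> E"
    and "k \<in> {1..r}"
    and "\<forall>t\<in>{1..r}. e \<in> A t \<longleftrightarrow> t \<le> k"
    and "minimal_presenting E indep A r e k Ed"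
    and "is_tree {1..k} Ed"
    and "Ed = (\<lambda>t. {i t, j t}) ` {1..k - 1}"
    and "inj_on (\<lambda>t. {i t, j t}) {1..k - 1}"
  shows "is_presentation (E - {e}) (dual_indep (E - {e}) (del_indep indep e))
           (\<lambda>t. if t \<le> k - 1
                 then mcl (E - {e}) (del_indep indep e) (A (i t) \<union> A (j t) - {e})
                 else A (t + 1))
           (r - 1)"
proof -
  note M = assms(1) and eE = assms(4) and eA = assms(6) and EdEq = assms(9)
  have k1: "1 \<le> k" and kr: "k \<le> r" using assms(5) by auto
  have fE: "finite E" using M unfolding matroid_def by blast
  have pres: "is_presentation E (dual_indep E indep) A r" using assms(2) unfolding maximal_presentation_of_dual_def by blast
  have Asub: "\<And>t. t \<in> {1..r} \<Longrightarrow> A t \<subseteq> E" using pres unfolding is_presentation_def by blast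
  have DI: "\<And>X. dual_indep E indep X \<longleftrightarrow> X \<subseteq> E \<and> finite X \<and> ptT A {1..r} X"
    using pres unfolding is_presentation_def pt_iff by blast
  have prs: "presenting E indep A r e k Ed" using assms(7) unfolding minimal_presenting_def by blast
  have connk: "connected_induced Ed {1..k}" using assms(8) unfolding is_tree_def by blast
  have eAt: "\<And>t. t \<in> {1..r} \<Longrightarrow> e \<in> A t \<longleftrightarrow> t \<le> k" using eA by blast
  define B where "B = (\<lambda>t. if t \<le> k - 1
                 then mcl (E - {e}) (del_indep indep e) (A (i t) \<union> A (j t) - {e})
                 else A (t + 1))"
  have rE: "mrank indep (E - {e}) = mrank indep E"
  proof -
    have "ptT A {1..r} {e}" unfolding ptT_def using eAt[of 1] k1 kr by (intro exI[of _ "\<lambda>_. 1"]) auto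
    then have "dual_indep E indep {e}" using DI eE by auto
    then show ?thesis unfolding dual_indep_def by simp
  qed
  have S2: "dual_indep (E - {e}) (del_indep indep e) X \<longleftrightarrow> ptT A {1..r} (insert e X)"
    if X: "X \<subseteq> E - {e}" for X
  proof -
    have "dual_indep (E - {e}) (del_indep indep e) X \<longleftrightarrow> mrank indep (E - {e} - X) = mrank indep (E - {e})"
      unfolding dual_indep_def using X by (simp add: mrank_del)
    also have "\<dots> \<longleftrightarrow> mrank indep (E - insert e X) = mrank indep E"
    proof -
      have "E - {e} - X = E - insert e X" by blast
      then show ?thesis using rE by simp
    qed
    also have "\<dots> \<longleftrightarrow> dual_indep E indep (insert e X)" unfolding dual_indep_def using X eE by auto
    also have "\<dots> \<longleftrightarrow> ptT A {1..r} (insert e X)"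
    proof -
      have "insert e X \<subseteq> E" using X eE by blast
      moreover then have "finite (insert e X)" using fE by (rule finite_subset)
      ultimately show ?thesis using DI[of "insert e X"] by simp
    qed
    finally show ?thesis .
  qed
  have Bsub: "B t \<subseteq> E - {e}" if t: "t \<in> {1..r - 1}" for t
  proof (cases "t \<le> k - 1")
    case True then show ?thesis unfolding B_def mcl_def by auto
  next
    case False
    then have "t + 1 \<in> {1..r}" "\<not> t + 1 \<le> k" using t by auto
    then show ?thesis unfolding B_def using False Asub eAt by auto
  qed
  have fwd: "ptT B {1..r - 1} X" if X: "X \<subseteq> E - {e}" and P: "ptT A {1..r} (insert e X)" for X
  proof -
    obtain \<phi> where \<phi>i: "inj_on \<phi> (insert e X)" and \<phi>: "\<forall>x\<in>insert e X. \<phi> x \<in> {1..r} \<and> x \<in> A (\<phi> x)"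
      using P unfolding ptT_def by blast
    define p where "p = \<phi> e"
    have "p \<in> {1..r}" "e \<in> A p" using \<phi> unfolding p_def by auto
    then have pk: "p \<in> {1..k}" using eAt by auto
    obtain g where gi: "inj_on g ({1..k} - {p})"
      and g: "\<forall>v\<in>{1..k} - {p}. g v \<in> {1..k - 1} \<and> (v = i (g v) \<or> v = j (g v)) \<and> i (g v) \<in> {1..k} \<and> j (g v) \<in> {1..k}"
      using tree_inj[OF connk pk EdEq] by blast
    define \<psi> where "\<psi> x = (if \<phi> x \<le> k then g (\<phi> x) else \<phi> x - 1)" for x
    have xne: "x \<noteq> e" "\<phi> x \<noteq> p" if "x \<in> X" for x
    proof -
      show "x \<noteq> e" using that X by blast
      show "\<phi> x \<noteq> p"
      proof
        assume "\<phi> x = p"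
        then have "\<phi> x = \<phi> e" unfolding p_def .
        then have "x = e" using \<phi>i that by (auto simp: inj_on_def)
        then show False using \<open>x \<noteq> e\<close> by blast
      qed
    qed
    have good: "\<psi> x \<in> {1..r - 1} \<and> x \<in> B (\<psi> x)" if x: "x \<in> X" for x
    proof (cases "\<phi> x \<le> k")
      case True
      have v: "\<phi> x \<in> {1..k} - {p}" using True \<phi> x xne[OF x] by auto
      have gv: "g (\<phi> x) \<in> {1..k - 1}" "\<phi> x = i (g (\<phi> x)) \<or> \<phi> x = j (g (\<phi> x))"
        "i (g (\<phi> x)) \<in> {1..k}" "j (g (\<phi> x)) \<in> {1..k}" using g v by auto
      have \<psi>x: "\<psi> x = g (\<phi> x)" unfolding \<psi>_def using True by simp
      have Bx: "B (g (\<phi> x)) = mcl (E - {e}) (del_indep indep e) (A (i (g (\<phi> x))) \<union> A (j (g (\<phi> x))) - {e})"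
        unfolding B_def using gv(1) by simp
      have sub: "A (i (g (\<phi> x))) \<union> A (j (g (\<phi> x))) - {e} \<subseteq> E - {e}"
        using Asub[of "i (g (\<phi> x))"] Asub[of "j (g (\<phi> x))"] gv(3,4) kr by auto
      have "x \<in> A (i (g (\<phi> x))) \<union> A (j (g (\<phi> x))) - {e}" using \<phi> x gv(2) xne[OF x] by auto
      then have "x \<in> B (g (\<phi> x))" unfolding Bx using mcl_del_ext[OF sub] by blast
      moreover have "g (\<phi> x) \<in> {1..r - 1}" using gv(1) kr by auto
      ultimately show ?thesis unfolding \<psi>x by simp
    next
      case False
      have \<psi>x: "\<psi> x = \<phi> x - 1" unfolding \<psi>_def using False by simp
      have r: "\<phi> x \<in> {1..r}" "x \<in> A (\<phi> x)" using \<phi> x by auto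
      have "\<not> (\<phi> x - 1 \<le> k - 1)" using False k1 by simp
      then have "B (\<phi> x - 1) = A (\<phi> x)" unfolding B_def using False k1 by simp
      then show ?thesis unfolding \<psi>x using r False k1 by auto
    qed
    have "inj_on \<psi> X"
    proof (rule inj_onI)
      fix x y assume xy: "x \<in> X" "y \<in> X" "\<psi> x = \<psi> y"
      have ph: "\<phi> x \<in> {1..r}" "\<phi> y \<in> {1..r}" using \<phi> xy by auto
      have "\<phi> x = \<phi> y"
      proof (cases "\<phi> x \<le> k"; cases "\<phi> y \<le> k")
        assume a: "\<phi> x \<le> k" "\<phi> y \<le> k"
        then have "g (\<phi> x) = g (\<phi> y)" using xy(3) unfolding \<psi>_def by simp
        moreover have "\<phi> x \<in> {1..k} - {p}" using a(1) ph(1) xne(2)[OF xy(1)] by auto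
        moreover have "\<phi> y \<in> {1..k} - {p}" using a(2) ph(2) xne(2)[OF xy(2)] by auto
        ultimately show ?thesis using gi unfolding inj_on_def by blast
      next
        assume a: "\<phi> x \<le> k" "\<not> \<phi> y \<le> k"
        have "\<phi> x \<in> {1..k} - {p}" using a(1) ph(1) xne(2)[OF xy(1)] by auto
        then have "g (\<phi> x) \<le> k - 1" using g by auto
        moreover have "\<psi> x = g (\<phi> x)" "\<psi> y = \<phi> y - 1" unfolding \<psi>_def using a by auto
        ultimately show ?thesis using xy(3) a k1 by simp
      next
        assume a: "\<not> \<phi> x \<le> k" "\<phi> y \<le> k"
        have "\<phi> y \<in> {1..k} - {p}" using a(2) ph(2) xne(2)[OF xy(2)] by auto
        then have "g (\<phi> y) \<le> k - 1" using g by auto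
        moreover have "\<psi> y = g (\<phi> y)" "\<psi> x = \<phi> x - 1" unfolding \<psi>_def using a by auto
        ultimately show ?thesis using xy(3) a k1 by simp
      next
        assume a: "\<not> \<phi> x \<le> k" "\<not> \<phi> y \<le> k"
        then have "\<phi> x - 1 = \<phi> y - 1" using xy(3) unfolding \<psi>_def by simp
        then show ?thesis using a k1 by simp
      qed
      moreover have "x \<in> insert e X" "y \<in> insert e X" using xy by auto
      ultimately show "x = y" using \<phi>i unfolding inj_on_def by blast
    qed
    then show ?thesis unfolding ptT_def using good by blast
  qed
  have bwd: "ptT A {1..r} (insert e X)" if X: "X \<subseteq> E - {e}" and P: "ptT B {1..r - 1} X" for X
  proof (rule ccontr)
    assume nP: "\<not> ptT A {1..r} (insert e X)"
    have fX: "finite X" using X fE by (meson finite_Diff finite_subset)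
    then have fY: "finite (insert e X)" by simp
    obtain C where C: "C \<subseteq> insert e X" "\<not> ptT A {1..r} C" "\<forall>c\<in>C. ptT A {1..r} (C - {c})"
      using min_dep[OF fY nP] by blast
    have fC: "finite C" using C(1) fY by (rule finite_subset)
    have CE: "C \<subseteq> E" using C(1) X eE by blast
    define S where "S = nbh A {1..r} C"
    have cS: "card S < card C" unfolding S_def using circuit_deficient[OF _ fC C(2) C(3)] by simp
    have fS: "finite S" and Sr: "S \<subseteq> {1..r}" unfolding S_def nbh_def by auto
    have EH: "card Z \<le> card (nbh B {1..r - 1} Z)" if "Z \<subseteq> X" for Z
      using easy_hall[OF _ P that] by simp
    show False
    proof (cases "e \<in> C")
      case True
      define C' where "C' = C - {e}"
      have C'X: "C' \<subseteq> X" using C(1) unfolding C'_def by blast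
      have kS: "{1..k} \<subseteq> S"
      proof
        fix t assume t: "t \<in> {1..k}"
        then have "t \<in> {1..r}" using kr by auto
        moreover have "e \<in> A t" using eAt[OF \<open>t \<in> {1..r}\<close>] t by auto
        ultimately show "t \<in> S" unfolding S_def nbh_def using True by blast
      qed
      have NBsub: "nbh B {1..r - 1} C' \<subseteq> {1..k - 1} \<union> (\<lambda>t. t - 1) ` (S - {1..k})"
      proof
        fix t assume t: "t \<in> nbh B {1..r - 1} C'"
        then have t1: "t \<in> {1..r - 1}" "B t \<inter> C' \<noteq> {}" unfolding nbh_def by auto
        show "t \<in> {1..k - 1} \<union> (\<lambda>t. t - 1) ` (S - {1..k})"
        proof (cases "t \<le> k - 1")
          case True then show ?thesis using t1 by auto
        next
          case False
          then have "B t = A (t + 1)" unfolding B_def by simp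
          then have "A (t + 1) \<inter> C \<noteq> {}" using t1 unfolding C'_def by blast
          moreover have "t + 1 \<in> {1..r}" "t + 1 \<notin> {1..k}" using t1 False by auto
          ultimately have "t + 1 \<in> S - {1..k}" unfolding S_def nbh_def by blast
          moreover have "t = (t + 1) - 1" by simp
          ultimately show ?thesis by blast
        qed
      qed
      have "card (nbh B {1..r - 1} C') \<le> card ({1..k - 1} \<union> (\<lambda>t. t - 1) ` (S - {1..k}))"
        using NBsub by (intro card_mono) (use fS in auto)
      also have "\<dots> \<le> card {1..k - 1} + card ((\<lambda>t. t - 1) ` (S - {1..k}))" by (rule card_Un_le)
      also have "\<dots> \<le> (k - 1) + card (S - {1..k})" using card_image_le[of "S - {1..k}" "\<lambda>t. t - 1"] fS by simp
      also have "card (S - {1..k}) = card S - k" using kS fS by (simp add: card_Diff_subset)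
      finally have le1: "card (nbh B {1..r - 1} C') \<le> k - 1 + (card S - k)" .
      have "card S \<ge> k" using card_mono[OF fS kS] by simp
      moreover have "card C' = card C - 1" unfolding C'_def using True fC by simp
      moreover have "card C' \<le> card (nbh B {1..r - 1} C')" using EH[OF C'X] .
      ultimately show False using le1 cS k1 by linarith
    next
      case False
      have CX: "C \<subseteq> X" using C(1) False by blast
      have K: "c \<notin> mcl E indep (E - C)" if c: "c \<in> C" for c
      proof
        assume cc: "c \<in> mcl E indep (E - C)"
        have "C - {c} \<subseteq> E" "finite (C - {c})" using CE fC by auto
        then have "dual_indep E indep (C - {c})" using DI C(3) c by blast
        then have r1: "mrank indep (E - (C - {c})) = mrank indep E" unfolding dual_indep_def by simp
        have "\<not> dual_indep E indep C" using DI C(2) by blast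
        then have r2: "mrank indep (E - C) \<noteq> mrank indep E" unfolding dual_indep_def using CE by simp
        have "E - (C - {c}) = insert c (E - C)" using c CE by blast
        then have "mrank indep (insert c (E - C)) \<noteq> mrank indep (E - C)" using r1 r2 by simp
        then show False using cc unfolding mcl_def by simp
      qed
      have clW: "mcl E indep Z \<subseteq> E - C" if Z: "Z \<subseteq> E - C" for Z
      proof
        fix x assume x: "x \<in> mcl E indep Z"
        then have "x \<in> mcl E indep (E - C)" using mcl_mono[OF M Z] by blast
        then have "x \<notin> C" using K by blast
        moreover have "x \<in> E" using x unfolding mcl_def by simp
        ultimately show "x \<in> E - C" by blast
      qed
      define P where "P = {a \<in> {1..k}. A a \<inter> C = {}}"
      define Q2 where "Q2 = {t \<in> {k + 1..r}. A t \<inter> C = {}}"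
      define NB where "NB = nbh B {1..r - 1} C"
      have fP: "finite P" and fQ2: "finite Q2" unfolding P_def Q2_def by auto
      have part: "card S + card P + card Q2 = r"
      proof -
        have "{1..r} = S \<union> P \<union> Q2" unfolding S_def P_def Q2_def nbh_def using kr by auto
        moreover have "S \<inter> P = {}" "(S \<union> P) \<inter> Q2 = {}" unfolding S_def P_def Q2_def nbh_def by auto
        ultimately have "card {1..r} = card S + card P + card Q2"
          using fS fP fQ2 by (simp add: card_Un_disjoint)
        then show ?thesis by simp
      qed
      have connP: "connected_induced Ed P"
        unfolding connected_induced_def
      proof (intro ballI)
        fix a b assume a: "a \<in> P" and b: "b \<in> P"
        show "(a, b) \<in> (induced_adj Ed P)\<^sup>*"
        proof (cases "a = b")
          case True then show ?thesis by simp
        next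
          case False
          have ak: "a \<in> {1..k}" "b \<in> {1..k}" using a b unfolding P_def by auto
          define U where "U = Ae A r e (mcl E indep (A a \<union> A b))"
          have cU: "connected_induced Ed U" using prs ak False unfolding presenting_def U_def by blast
          have ar: "a \<in> {1..r}" "b \<in> {1..r}" using ak kr by auto
          have abE: "A a \<union> A b \<subseteq> E" using Asub ar by blast
          have abW: "A a \<union> A b \<subseteq> E - C" using abE a b unfolding P_def by blast
          have ext: "A a \<union> A b \<subseteq> mcl E indep (A a \<union> A b)" using abE by (rule mcl_ext)
          have eab: "e \<in> A a" "e \<in> A b" using eAt ar ak by auto
          have aU: "a \<in> U" "b \<in> U" unfolding U_def Ae_def using ar ext eab by auto
          have UP: "U \<subseteq> P"
          proof
            fix t assume t: "t \<in> U"
            then have t1: "t \<in> {1..r}" "A t \<subseteq> mcl E indep (A a \<union> A b)" "e \<in> A t" unfolding U_def Ae_def by auto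
            then have "t \<le> k" using eAt by blast
            moreover have "A t \<subseteq> E - C" using t1(2) clW[OF abW] by blast
            ultimately show "t \<in> P" unfolding P_def using t1(1) by auto
          qed
          have "(a, b) \<in> (induced_adj Ed U)\<^sup>*" using cU aU unfolding connected_induced_def by blast
          then show ?thesis using conn_mono[OF UP] by blast
        qed
      qed
      have D1ex: "\<exists>D1. D1 \<subseteq> {1..k - 1} \<and> D1 \<inter> NB = {} \<and> card P \<le> card D1 + 1"
      proof (cases "P = {}")
        case True then show ?thesis by (intro exI[of _ "{}"]) simp
      next
        case False
        then obtain p0 where p0: "p0 \<in> P" by blast
        obtain g where gi: "inj_on g (P - {p0})"
          and g: "\<forall>v\<in>P - {p0}. g v \<in> {1..k - 1} \<and> (v = i (g v) \<or> v = j (g v)) \<and> i (g v) \<in> P \<and> j (g v) \<in> P"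
          using tree_inj[OF connP p0 EdEq] by blast
        have c1: "card (g ` (P - {p0})) = card P - 1" using card_image[OF gi] p0 fP by simp
        have s1: "g ` (P - {p0}) \<subseteq> {1..k - 1}" using g by blast
        have d1: "g ` (P - {p0}) \<inter> NB = {}"
        proof (rule ccontr)
          assume "g ` (P - {p0}) \<inter> NB \<noteq> {}"
          then obtain v where v: "v \<in> P - {p0}" "g v \<in> NB" by blast
          define t where "t = g v"
          have t: "t \<in> {1..k - 1}" "i t \<in> P" "j t \<in> P" using g v(1) unfolding t_def by auto
          have ijr: "i t \<in> {1..r}" "j t \<in> {1..r}" using t(2,3) kr unfolding P_def by auto
          have Wsub: "A (i t) \<union> A (j t) - {e} \<subseteq> E - C" using Asub ijr t(2,3) unfolding P_def by blast
          have "B t = mcl (E - {e}) (del_indep indep e) (A (i t) \<union> A (j t) - {e})" unfolding B_def using t(1) by simp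
          also have "\<dots> \<subseteq> mcl E indep (A (i t) \<union> A (j t) - {e}) - {e}" by (rule mcl_del_sub) simp
          also have "\<dots> \<subseteq> E - C" using clW[OF Wsub] by blast
          finally have "B t \<inter> C = {}" by blast
          moreover have "t \<in> NB" using v(2) unfolding t_def .
          ultimately show False unfolding NB_def nbh_def by blast
        qed
        show ?thesis using c1 s1 d1 by (intro exI[of _ "g ` (P - {p0})"]) simp
      qed
      then obtain D1 where D1: "D1 \<subseteq> {1..k - 1}" "D1 \<inter> NB = {}" "card P \<le> card D1 + 1" by blast
      define D2 where "D2 = (\<lambda>t. t - 1) ` Q2"
      have Q2k: "\<And>t. t \<in> Q2 \<Longrightarrow> k + 1 \<le> t \<and> t \<le> r" unfolding Q2_def by auto
      have "inj_on (\<lambda>t. t - 1) Q2"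
      proof (rule inj_onI)
        fix x y assume xy: "x \<in> Q2" "y \<in> Q2" "x - 1 = y - 1"
        from Q2k[OF xy(1)] Q2k[OF xy(2)] xy(3) show "x = y" by arith
      qed
      then have cD2: "card D2 = card Q2" unfolding D2_def by (rule card_image)
      have s2: "D2 \<subseteq> {k..r - 1}" unfolding D2_def using Q2k by force
      have d2: "D2 \<inter> NB = {}"
      proof (rule ccontr)
        assume "D2 \<inter> NB \<noteq> {}"
        then obtain t where t: "t \<in> Q2" "t - 1 \<in> NB" unfolding D2_def by blast
        have "\<not> (t - 1 \<le> k - 1)" using Q2k[OF t(1)] k1 by arith
        then have "B (t - 1) = A t" unfolding B_def using Q2k[OF t(1)] by simp
        moreover have "A t \<inter> C = {}" using t(1) unfolding Q2_def by simp
        ultimately show False using t(2) unfolding NB_def nbh_def by auto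
      qed
      have d12: "D1 \<inter> D2 = {}"
      proof (rule ccontr)
        assume "D1 \<inter> D2 \<noteq> {}"
        then obtain x where "x \<in> D1" "x \<in> D2" by blast
        then have "x \<le> k - 1" "k \<le> x" using D1(1) s2 by auto
        then show False using k1 by arith
      qed
      have sNB: "NB \<subseteq> {1..r - 1}" unfolding NB_def nbh_def by auto
      have fNB: "finite NB" using sNB by (rule finite_subset) simp
      have fD1: "finite D1" using D1(1) by (rule finite_subset) simp
      have fD2: "finite D2" using s2 by (rule finite_subset) simp
      have "{1..k - 1} \<subseteq> {1..r - 1}" "{k..r - 1} \<subseteq> {1..r - 1}" using kr k1 by auto
      then have "NB \<union> D1 \<union> D2 \<subseteq> {1..r - 1}" using sNB D1(1) s2 by blast
      then have "card (NB \<union> D1 \<union> D2) \<le> r - 1" using card_mono[of "{1..r - 1}"] by fastforce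
      moreover have "card (NB \<union> D1 \<union> D2) = card NB + card D1 + card D2"
      proof -
        have "NB \<inter> D1 = {}" using D1(2) by blast
        then have c1: "card (NB \<union> D1) = card NB + card D1" using fNB fD1 by (rule card_Un_disjoint[rotated 2])
        have "(NB \<union> D1) \<inter> D2 = {}" using d2 d12 by blast
        then have "card (NB \<union> D1 \<union> D2) = card (NB \<union> D1) + card D2" using fNB fD1 fD2 by (simp add: card_Un_disjoint)
        then show ?thesis using c1 by simp
      qed
      ultimately have "card NB + card D1 + card D2 \<le> r - 1" by simp
      moreover have "card C \<le> card NB" unfolding NB_def using EH[OF CX] .
      ultimately show False using part cD2 D1(3) cS by linarith
    qed
  qed
  have main: "is_presentation (E - {e}) (dual_indep (E - {e}) (del_indep indep e)) B (r - 1)"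
    unfolding is_presentation_def
  proof (intro conjI allI ballI)
    fix t assume "t \<in> {1..r - 1}" then show "B t \<subseteq> E - {e}" by (rule Bsub)
  next
    fix X
    show "dual_indep (E - {e}) (del_indep indep e) X \<longleftrightarrow> X \<subseteq> E - {e} \<and> partial_transversal B (r - 1) X"
    proof (cases "X \<subseteq> E - {e}")
      case False then show ?thesis unfolding dual_indep_def by blast
    next
      case True
      then have "finite X" using fE by (meson finite_Diff finite_subset)
      then show ?thesis using S2[OF True] fwd[OF True] bwd[OF True] True unfolding pt_iff by blast
    qed
  qed
  then show ?thesis unfolding B_def .
qed

end
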